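(* Let $\pi_0\in(0,1)$ and let $F_0,F_1$ be continuous distribution functions. For each $n_v\ge1$, let $n_0\sim\mathrm{Binomial}(n_v,\pi_0)$, $n_1=n_v-n_0$, and let $k_0,k_1$ be random integers with $0\le k_0\le n_0$, $0\le k_1\le n_1$. Let $I\subset\mathbb R$ be nonempty compact, $g:I\to\mathbb R$, $\widehat g_{n_v}$ random real-valued functions on $I$, and $\widehat x_{n_v}$ random elements of $I$ (all measurable). Assume: (A1) $g$ is continuous on $I$; (A2) $\sup_{x\in I}|\widehat g_{n_v}(x)-g(x)|\to0$ in probability as $n_v\to\infty$; (A3) $\frac{n_0-k_0}{n_0}-(1-F_0(\widehat x_{n_v}))\to0$ and $\frac{k_1}{n_1}-F_1(\widehat x_{n_v})\to0$ in probability as $n_v\to\infty$ (the ratios being defined arbitrarily on the events $n_0=0$, resp. $n_1=0$); (A4) $g$ has a unique minimizer $x^*\in I$, and $\widehat g_{n_v}(\widehat x_{n_v})=\min_{x\in I}\widehat g_{n_v}(x)$. Then, as $n_v\to\infty$, $$\frac{n_0-k_0}{n_0+1}\xrightarrow{p}1-F_0(x^* ),\qquad \frac{k_1}{n_1+1}\xrightarrow{p}F_1(x^* ).$$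
   Context: In the paper: the validation set has $n_v$ i.i.d. instances, $n_0$ of class 0 and $n_1$ of class 1; $F_j$ is the continuous distribution function of the score in class $j$; $\widehat x_{n_v}$ is the THORS threshold, i.e. the minimizer of the empirical expected cost per instance $\widehat g_{n_v}$ on the validation set; $g(x)$ is the population expected cost per instance at threshold $x$; $k_0$ (resp. $k_1$) is the number of class-0 (resp. class-1) validation scores that are $\le\widehat x_{n_v}$, so $(n_0-k_0)/n_0$ and $k_1/n_1$ are the empirical false positive and false negative rates; $1-F_0(x)$ and $F_1(x)$ are the population false positive and false negative rates at threshold $x$. *)

theory Defs
  imports "HOL-Probability.Probability"
begin

definition conv_in_prob :: "'a measure \<Rightarrow> (nat \<Rightarrow> 'a \<Rightarrow> real) \<Rightarrow> real \<Rightarrow> bool" where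
  "conv_in_prob M X c \<longleftrightarrow>
     (\<forall>e>0. ((\<lambda>n. measure M {\<omega> \<in> space M. e < \<bar>X n \<omega> - c\<bar>}) \<longlongrightarrow> 0) sequentially)"

definition continuous_cdf :: "(real \<Rightarrow> real) \<Rightarrow> bool" where
  "continuous_cdf F \<longleftrightarrow> (\<exists>\<mu>. real_distribution \<mu> \<and> F = cdf \<mu>) \<and> continuous_on UNIV F"

end

theory Submission
  imports Defs
begin

lemma small3:
  assumes FM: "finite_measure M"
    and m1: "\<And>n. S1 n \<in> sets M" and m2: "\<And>n. S2 n \<in> sets M" and m3: "\<And>n. S3 n \<in> sets M"
    and l1: "(\<lambda>n. measure M (S1 n)) \<longlonglongrightarrow> 0"
    and l2: "(\<lambda>n. measure M (S2 n)) \<longlonglongrightarrow> 0"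
    and l3: "(\<lambda>n. measure M (S3 n)) \<longlonglongrightarrow> 0"
    and ev: "eventually (\<lambda>n. A n \<subseteq> S1 n \<union> S2 n \<union> S3 n) sequentially"
  shows "(\<lambda>n. measure M (A n)) \<longlonglongrightarrow> 0"
proof (rule tendsto_sandwich[where f="\<lambda>_. 0" and h="\<lambda>n. measure M (S1 n) + measure M (S2 n) + measure M (S3 n)"])
  interpret finite_measure M by (rule FM)
  show "eventually (\<lambda>n. 0 \<le> measure M (A n)) sequentially" by simp
  show "eventually (\<lambda>n. measure M (A n) \<le> measure M (S1 n) + measure M (S2 n) + measure M (S3 n)) sequentially"
    using ev
  proof eventually_elim
    case (elim n)
    have "measure M (A n) \<le> measure M (S1 n \<union> S2 n \<union> S3 n)"
      using finite_measure_mono[OF elim] m1 m2 m3 by auto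
    also have "\<dots> \<le> measure M (S1 n \<union> S2 n) + measure M (S3 n)"
      using m1 m2 m3 by (intro measure_Un_le) auto
    also have "measure M (S1 n \<union> S2 n) \<le> measure M (S1 n) + measure M (S2 n)"
      using m1 m2 by (intro measure_Un_le) auto
    finally show ?case by simp
  qed
  show "(\<lambda>_. 0::real) \<longlonglongrightarrow> 0" by simp
  show "(\<lambda>n. measure M (S1 n) + measure M (S2 n) + measure M (S3 n)) \<longlonglongrightarrow> 0"
    using tendsto_add_zero[OF tendsto_add_zero[OF l1 l2] l3] .
qed

lemma exp_lim:
  assumes "c > (0::real)"
  shows "(\<lambda>n. exp (real_of_int (- 2 * int n) * c)) \<longlonglongrightarrow> 0"
proof -
  have "(\<lambda>n. exp (real_of_int (- 2 * int n) * c)) = (\<lambda>n. exp (- 2 * c) ^ n)"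
    by (rule ext) (simp add: exp_of_nat_mult[symmetric] mult_ac)
  moreover have "(\<lambda>n. exp (- 2 * c) ^ n) \<longlonglongrightarrow> 0"
    using assms by (intro LIMSEQ_power_zero) auto
  ultimately show ?thesis by simp
qed

lemma inv_lim:
  "(\<lambda>n. a / real n) \<longlonglongrightarrow> (0::real)"
  using tendsto_mult[OF tendsto_const[of a] lim_inverse_n] by (simp add: divide_inverse)

lemma ratio_diff:
  assumes "(a::nat) \<le> m" "0 < m"
  shows "\<bar>real a / real (m+1) - real a / real m\<bar> \<le> 1 / real m"
proof -
  have eq: "real a / real m - real a / real (m+1) = real a / (real m * (real m + 1))"
    using assms by (simp add: field_simps)
  have "real a / (real m * (real m + 1)) \<le> real m / (real m * (real m + 1))"
    using assms by (intro divide_right_mono) auto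
  also have "\<dots> = 1 / (real m + 1)" using assms by simp
  also have "\<dots> \<le> 1 / real m" using assms by (intro divide_left_mono) auto
  finally have "real a / real m - real a / real (m+1) \<le> 1 / real m" using eq by simp
  moreover have "0 \<le> real a / real m - real a / real (m+1)" using eq by simp
  ultimately show ?thesis by simp
qed
lemma inv_bound:
  assumes "0 < (p::real)" "0 < (n::real)" "p * n / 2 < m"
  shows "1 / m < (2/p) / n"
proof -
  have m: "m > 0" using assms by (smt (verit) divide_pos_pos mult_pos_pos)
  have "p * n < 2 * m" using assms(3) by simp
  then show ?thesis using assms m by (simp add: field_simps)
qed
lemma fin3:
  fixes t L d R f e3 :: real
  assumes "t - L = d + R + f" "\<bar>d\<bar> < e3" "\<bar>R\<bar> \<le> e3" "\<bar>f\<bar> \<le> e3"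
  shows "\<bar>t - L\<bar> < 3 * e3"
proof -
  have "\<bar>t - L\<bar> \<le> \<bar>d\<bar> + \<bar>R\<bar> + \<bar>f\<bar>" unfolding assms(1)
    by (metis abs_triangle_ineq add.commute add_le_cancel_left order_trans)
  then show ?thesis using assms(2-4) by linarith
qed
lemma pos_from:
  fixes p n m :: real
  assumes "0 < p" "0 < n" "p * n / 2 < m" shows "0 < m"
  using assms by (smt (verit) divide_pos_pos mult_pos_pos)

theorem theorem6:
  fixes M :: "'a measure"
    and \<pi>0 :: real
    and F0 F1 :: "real \<Rightarrow> real"
    and n0 k0 k1 :: "nat \<Rightarrow> 'a \<Rightarrow> nat"
    and c0 c1 :: "nat \<Rightarrow> 'a \<Rightarrow> real"
    and I :: "real set"
    and g :: "real \<Rightarrow> real"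
    and ghat :: "nat \<Rightarrow> 'a \<Rightarrow> real \<Rightarrow> real"
    and xhat :: "nat \<Rightarrow> 'a \<Rightarrow> real"
    and xs :: real
  assumes P: "prob_space M"
    and pi0: "0 < \<pi>0" "\<pi>0 < 1"
    and F0: "continuous_cdf F0" and F1: "continuous_cdf F1"
    and n0_meas: "\<And>n. n0 n \<in> M \<rightarrow>\<^sub>M count_space UNIV"
    and n0_binom: "\<And>n. distr M (count_space UNIV) (n0 n) = measure_pmf (binomial_pmf n \<pi>0)"
    and k0_meas: "\<And>n. k0 n \<in> M \<rightarrow>\<^sub>M count_space UNIV"
    and k1_meas: "\<And>n. k1 n \<in> M \<rightarrow>\<^sub>M count_space UNIV"
    and k0_le: "\<And>n \<omega>. \<omega> \<in> space M \<Longrightarrow> k0 n \<omega> \<le> n0 n \<omega>"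
    and k1_le: "\<And>n \<omega>. \<omega> \<in> space M \<Longrightarrow> k1 n \<omega> \<le> n - n0 n \<omega>"
    and I: "compact I" "I \<noteq> {}"
    and ghat_meas: "\<And>n x. x \<in> I \<Longrightarrow> (\<lambda>\<omega>. ghat n \<omega> x) \<in> borel_measurable M"
    and xhat_meas: "\<And>n. xhat n \<in> borel_measurable M"
    and xhat_in: "\<And>n \<omega>. \<omega> \<in> space M \<Longrightarrow> xhat n \<omega> \<in> I"
    and c_meas: "\<And>n. c0 n \<in> borel_measurable M" "\<And>n. c1 n \<in> borel_measurable M"
    and A1: "continuous_on I g"
    and sup_meas: "\<And>n. (\<lambda>\<omega>. SUP x\<in>I. ereal \<bar>ghat n \<omega> x - g x\<bar>) \<in> borel_measurable M"
    and A2: "\<And>e. e > 0 \<Longrightarrow>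
       ((\<lambda>n. measure M {\<omega> \<in> space M. ereal e < (SUP x\<in>I. ereal \<bar>ghat n \<omega> x - g x\<bar>)}) \<longlongrightarrow> 0) sequentially"
    and A3a: "conv_in_prob M
       (\<lambda>n \<omega>. (if n0 n \<omega> = 0 then c0 n \<omega>
               else real (n0 n \<omega> - k0 n \<omega>) / real (n0 n \<omega>)) - (1 - F0 (xhat n \<omega>))) 0"
    and A3b: "conv_in_prob M
       (\<lambda>n \<omega>. (if n - n0 n \<omega> = 0 then c1 n \<omega>
               else real (k1 n \<omega>) / real (n - n0 n \<omega>)) - F1 (xhat n \<omega>)) 0"
    and A4a: "xs \<in> I" "\<And>x. x \<in> I \<Longrightarrow> x \<noteq> xs \<Longrightarrow> g xs < g x"
    and A4b: "\<And>n \<omega> x. \<omega> \<in> space M \<Longrightarrow> x \<in> I \<Longrightarrow> ghat n \<omega> (xhat n \<omega>) \<le> ghat n \<omega> x"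
  shows "conv_in_prob M (\<lambda>n \<omega>. real (n0 n \<omega> - k0 n \<omega>) / real (n0 n \<omega> + 1)) (1 - F0 xs)
         \<and> conv_in_prob M (\<lambda>n \<omega>. real (k1 n \<omega>) / real (n - n0 n \<omega> + 1)) (F1 xs)"
proof -
  interpret prob_space M by (rule P)
  note [measurable] = n0_meas k0_meas k1_meas xhat_meas c_meas
  have FM: "finite_measure M" by unfold_locales
  have F0c: "continuous_on UNIV F0" and F1c: "continuous_on UNIV F1"
    using F0 F1 unfolding continuous_cdf_def by auto
  have [measurable]: "F0 \<in> borel_measurable borel" "F1 \<in> borel_measurable borel"
    using F0c F1c by (auto intro: borel_measurable_continuous_onI)

  have xconv: "((\<lambda>n. measure M {\<omega>\<in>space M. \<delta> \<le> \<bar>xhat n \<omega> - xs\<bar>}) \<longlongrightarrow> 0) sequentially"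
    if d: "\<delta> > 0" for \<delta>
  proof -
    define K where "K = I \<inter> {x. \<delta> \<le> \<bar>x - xs\<bar>}"
    show ?thesis
    proof (cases "K = {}")
      case True
      have "{\<omega>\<in>space M. \<delta> \<le> \<bar>xhat n \<omega> - xs\<bar>} = {}" for n
        using True xhat_in unfolding K_def by auto
      then show ?thesis by (simp only:) simp
    next
      case False
      have "closed {x. \<delta> \<le> \<bar>x - xs\<bar>}"
        by (intro closed_Collect_le continuous_intros)
      then have "compact K" unfolding K_def using I(1) by (intro compact_Int_closed)
      moreover have "continuous_on K g" using A1 by (rule continuous_on_subset) (auto simp: K_def)
      ultimately obtain x1 where x1: "x1 \<in> K" "\<And>y. y \<in> K \<Longrightarrow> g x1 \<le> g y"
        using continuous_attains_inf[OF _ False] by blast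
      define \<eta> where "\<eta> = g x1 - g xs"
      have "x1 \<noteq> xs" using x1(1) d unfolding K_def by auto
      then have eta: "\<eta> > 0" using A4a x1(1) unfolding \<eta>_def K_def by auto
      have sub: "{\<omega>\<in>space M. \<delta> \<le> \<bar>xhat n \<omega> - xs\<bar>}
          \<subseteq> {\<omega> \<in> space M. ereal (\<eta>/3) < (SUP x\<in>I. ereal \<bar>ghat n \<omega> x - g x\<bar>)}" for n
      proof safe
        fix \<omega> assume \<omega>: "\<omega> \<in> space M" and dd: "\<delta> \<le> \<bar>xhat n \<omega> - xs\<bar>"
        show "ereal (\<eta>/3) < (SUP x\<in>I. ereal \<bar>ghat n \<omega> x - g x\<bar>)"
        proof (rule ccontr)
          assume "\<not> ?thesis"
          then have "(SUP x\<in>I. ereal \<bar>ghat n \<omega> x - g x\<bar>) \<le> ereal (\<eta>/3)" by simp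
          then have b: "\<And>x. x \<in> I \<Longrightarrow> \<bar>ghat n \<omega> x - g x\<bar> \<le> \<eta>/3"
            by (simp add: SUP_le_iff)
          have xi: "xhat n \<omega> \<in> K" using xhat_in[OF \<omega>] dd unfolding K_def by auto
          have "g x1 \<le> g (xhat n \<omega>)" using x1(2)[OF xi] .
          moreover have "\<bar>ghat n \<omega> (xhat n \<omega>) - g (xhat n \<omega>)\<bar> \<le> \<eta>/3"
            using b xhat_in[OF \<omega>] by blast
          moreover have "\<bar>ghat n \<omega> xs - g xs\<bar> \<le> \<eta>/3" using b A4a(1) by blast
          moreover have "ghat n \<omega> (xhat n \<omega>) \<le> ghat n \<omega> xs" using A4b[OF \<omega> A4a(1)] .
          ultimately have "g x1 \<le> g xs + 2 * \<eta> / 3"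
            by (auto simp: abs_if split: if_splits)
          then show False using eta unfolding \<eta>_def by (simp add: field_simps)
        qed
      qed
      have ms: "{\<omega> \<in> space M. ereal (\<eta>/3) < (SUP x\<in>I. ereal \<bar>ghat n \<omega> x - g x\<bar>)} \<in> sets M" for n
        using sup_meas[of n] by measurable
      show ?thesis
      proof (rule tendsto_sandwich[where f="\<lambda>_. 0"])
        show "eventually (\<lambda>n. 0 \<le> measure M {\<omega>\<in>space M. \<delta> \<le> \<bar>xhat n \<omega> - xs\<bar>}) sequentially" by simp
        show "eventually (\<lambda>n. measure M {\<omega>\<in>space M. \<delta> \<le> \<bar>xhat n \<omega> - xs\<bar>}
           \<le> measure M {\<omega> \<in> space M. ereal (\<eta>/3) < (SUP x\<in>I. ereal \<bar>ghat n \<omega> x - g x\<bar>)}) sequentially"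
          using finite_measure_mono[OF sub ms] by simp
      qed (use A2[of "\<eta>/3"] eta in auto)
    qed
  qed

  have Fconv: "((\<lambda>n. measure M {\<omega>\<in>space M. e < \<bar>F (xhat n \<omega>) - F xs\<bar>}) \<longlongrightarrow> 0) sequentially"
    if Fc: "continuous_on UNIV F" and e: "e > 0" for F :: "real \<Rightarrow> real" and e
  proof -
    have "isCont F xs" using Fc by (simp add: continuous_on_eq_continuous_at)
    then obtain d where d: "d > 0" "\<And>x. \<bar>x - xs\<bar> < d \<Longrightarrow> \<bar>F x - F xs\<bar> < e"
      using e unfolding continuous_at_eps_delta dist_real_def by blast
    have sub: "{\<omega>\<in>space M. e < \<bar>F (xhat n \<omega>) - F xs\<bar>} \<subseteq> {\<omega>\<in>space M. d/2 \<le> \<bar>xhat n \<omega> - xs\<bar>}" for n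
    proof safe
      fix \<omega> assume "\<omega> \<in> space M" "e < \<bar>F (xhat n \<omega>) - F xs\<bar>"
      then show "d/2 \<le> \<bar>xhat n \<omega> - xs\<bar>" using d(2)[of "xhat n \<omega>"] d(1) by force
    qed
    have ms: "{\<omega>\<in>space M. d/2 \<le> \<bar>xhat n \<omega> - xs\<bar>} \<in> sets M" for n by measurable
    show ?thesis
    proof (rule tendsto_sandwich[where f="\<lambda>_. 0"])
      show "eventually (\<lambda>n. 0 \<le> measure M {\<omega>\<in>space M. e < \<bar>F (xhat n \<omega>) - F xs\<bar>}) sequentially" by simp
      show "eventually (\<lambda>n. measure M {\<omega>\<in>space M. e < \<bar>F (xhat n \<omega>) - F xs\<bar>}
         \<le> measure M {\<omega>\<in>space M. d/2 \<le> \<bar>xhat n \<omega> - xs\<bar>}) sequentially"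
        using finite_measure_mono[OF sub ms] by simp
    qed (use xconv[of "d/2"] d in auto)
  qed

  have bd: "binomial_distribution \<pi>0" using pi0 by unfold_locales auto
  define B0 where "B0 n = n0 n -` {x. real x / real n \<le> \<pi>0 - \<pi>0/2} \<inter> space M" for n
  define B1 where "B1 n = n0 n -` {x. \<pi>0 + (1-\<pi>0)/2 \<le> real x / real n} \<inter> space M" for n
  have B0m: "B0 n \<in> sets M" for n unfolding B0_def by (rule measurable_sets[OF n0_meas]) auto
  have B1m: "B1 n \<in> sets M" for n unfolding B1_def by (rule measurable_sets[OF n0_meas]) auto
  have B0l: "(\<lambda>n. measure M (B0 n)) \<longlonglongrightarrow> 0"
  proof (rule tendsto_sandwich[where f="\<lambda>_. 0" and h="\<lambda>n. exp (real_of_int (- 2 * int n) * (\<pi>0/2)\<^sup>2)"])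
    show "eventually (\<lambda>n. 0 \<le> measure M (B0 n)) sequentially" by simp
    show "eventually (\<lambda>n. measure M (B0 n) \<le> exp (real_of_int (- 2 * int n) * (\<pi>0/2)\<^sup>2)) sequentially"
      using eventually_gt_at_top[of "0::nat"]
    proof eventually_elim
      case (elim n)
      have "measure M (B0 n) = measure (distr M (count_space UNIV) (n0 n)) {x. real x / real n \<le> \<pi>0 - \<pi>0/2}"
        unfolding B0_def by (subst measure_distr[OF n0_meas]) auto
      also have "\<dots> \<le> exp (real_of_int (- 2 * int n) * (\<pi>0/2)\<^sup>2)"
        unfolding n0_binom using binomial_distribution.prob_le'[OF bd elim, of "\<pi>0/2"] pi0 by simp
      finally show ?case .
    qed
  qed (use exp_lim[of "(\<pi>0/2)\<^sup>2"] pi0 in auto)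
  have B1l: "(\<lambda>n. measure M (B1 n)) \<longlonglongrightarrow> 0"
  proof (rule tendsto_sandwich[where f="\<lambda>_. 0" and h="\<lambda>n. exp (real_of_int (- 2 * int n) * ((1-\<pi>0)/2)\<^sup>2)"])
    show "eventually (\<lambda>n. 0 \<le> measure M (B1 n)) sequentially" by simp
    show "eventually (\<lambda>n. measure M (B1 n) \<le> exp (real_of_int (- 2 * int n) * ((1-\<pi>0)/2)\<^sup>2)) sequentially"
      using eventually_gt_at_top[of "0::nat"]
    proof eventually_elim
      case (elim n)
      have "measure M (B1 n) = measure (distr M (count_space UNIV) (n0 n)) {x. \<pi>0 + (1-\<pi>0)/2 \<le> real x / real n}"
        unfolding B1_def by (subst measure_distr[OF n0_meas]) auto
      also have "\<dots> \<le> exp (real_of_int (- 2 * int n) * ((1-\<pi>0)/2)\<^sup>2)"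
        unfolding n0_binom using binomial_distribution.prob_ge'[OF bd elim, of "(1-\<pi>0)/2"] pi0 by simp
      finally show ?case .
    qed
  qed (use exp_lim[of "((1-\<pi>0)/2)\<^sup>2"] pi0 in auto)

  have hA: "conv_in_prob M (\<lambda>n \<omega>. real (n0 n \<omega> - k0 n \<omega>) / real (n0 n \<omega> + 1)) (1 - F0 xs)"
    unfolding conv_in_prob_def
  proof (intro allI impI)
    fix e :: real assume e: "e > 0"
    define e3 where "e3 = e / 3"
    have e3: "e3 > 0" "e = 3 * e3" using e unfolding e3_def by auto
    define R where "R n \<omega> = (if n0 n \<omega> = 0 then c0 n \<omega> else real (n0 n \<omega> - k0 n \<omega>) / real (n0 n \<omega>)) - (1 - F0 (xhat n \<omega>))" for n \<omega>
    have [measurable]: "R n \<in> borel_measurable M" for n unfolding R_def by measurable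
    define S1 where "S1 n = {\<omega>\<in>space M. e3 < \<bar>R n \<omega> - 0\<bar>}" for n
    define S2 where "S2 n = {\<omega>\<in>space M. e3 < \<bar>F0 (xhat n \<omega>) - F0 xs\<bar>}" for n
    have S1m: "S1 n \<in> sets M" for n unfolding S1_def by measurable
    have S2m: "S2 n \<in> sets M" for n unfolding S2_def by measurable
    have S1l: "(\<lambda>n. measure M (S1 n)) \<longlonglongrightarrow> 0"
      using A3a e3(1) unfolding conv_in_prob_def S1_def R_def by blast
    have S2l: "(\<lambda>n. measure M (S2 n)) \<longlonglongrightarrow> 0"
      using Fconv[OF F0c e3(1)] unfolding S2_def .
    have evh: "eventually (\<lambda>n. (2/\<pi>0) / real n < e3) sequentially"
      using order_tendstoD(2)[OF inv_lim[of "2/\<pi>0"] e3(1)] .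
    show "(\<lambda>n. measure M {\<omega> \<in> space M. e < \<bar>real (n0 n \<omega> - k0 n \<omega>) / real (n0 n \<omega> + 1) - (1 - F0 xs)\<bar>}) \<longlonglongrightarrow> 0"
    proof (rule small3[OF FM S1m S2m B0m S1l S2l B0l])
      show "eventually (\<lambda>n. {\<omega> \<in> space M. e < \<bar>real (n0 n \<omega> - k0 n \<omega>) / real (n0 n \<omega> + 1) - (1 - F0 xs)\<bar>}
              \<subseteq> S1 n \<union> S2 n \<union> B0 n) sequentially"
        using evh eventually_gt_at_top[of "0::nat"]
      proof eventually_elim
        case (elim n)
        show ?case
        proof (intro subsetI)
          fix \<omega> assume "\<omega> \<in> {\<omega> \<in> space M. e < \<bar>real (n0 n \<omega> - k0 n \<omega>) / real (n0 n \<omega> + 1) - (1 - F0 xs)\<bar>}"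
          then have \<omega>: "\<omega> \<in> space M" and big: "e < \<bar>real (n0 n \<omega> - k0 n \<omega>) / real (n0 n \<omega> + 1) - (1 - F0 xs)\<bar>"
            by auto
          show "\<omega> \<in> S1 n \<union> S2 n \<union> B0 n"
          proof (rule ccontr)
            assume "\<omega> \<notin> S1 n \<union> S2 n \<union> B0 n"
            then have n1: "\<bar>R n \<omega>\<bar> \<le> e3" and n2: "\<bar>F0 (xhat n \<omega>) - F0 xs\<bar> \<le> e3"
              and n3: "\<not> real (n0 n \<omega>) / real n \<le> \<pi>0 - \<pi>0/2"
              using \<omega> unfolding S1_def S2_def B0_def by auto
            have "\<pi>0 / 2 < real (n0 n \<omega>) / real n" using n3 by simp
            then have m: "\<pi>0 * real n / 2 < real (n0 n \<omega>)" using elim(2) by (simp add: field_simps)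
            have "0 < real (n0 n \<omega>)" using pos_from[OF pi0(1) _ m] elim(2) by simp
            then have mpos: "0 < n0 n \<omega>" by simp
            have d1: "\<bar>real (n0 n \<omega> - k0 n \<omega>) / real (n0 n \<omega> + 1) - real (n0 n \<omega> - k0 n \<omega>) / real (n0 n \<omega>)\<bar>
                \<le> 1 / real (n0 n \<omega>)"
              using ratio_diff[of "n0 n \<omega> - k0 n \<omega>" "n0 n \<omega>"] mpos by simp
            have d2: "1 / real (n0 n \<omega>) < (2/\<pi>0) / real n"
              using inv_bound[OF pi0(1) _ m] elim(2) by simp
            have Req: "R n \<omega> = real (n0 n \<omega> - k0 n \<omega>) / real (n0 n \<omega>) - (1 - F0 (xhat n \<omega>))"
              using mpos unfolding R_def by simp
            have "real (n0 n \<omega> - k0 n \<omega>) / real (n0 n \<omega> + 1) - (1 - F0 xs)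
              = (real (n0 n \<omega> - k0 n \<omega>) / real (n0 n \<omega> + 1) - real (n0 n \<omega> - k0 n \<omega>) / real (n0 n \<omega>))
                + R n \<omega> - (F0 (xhat n \<omega>) - F0 xs)"
              unfolding Req by simp
            also have "\<dots> = (real (n0 n \<omega> - k0 n \<omega>) / real (n0 n \<omega> + 1) - real (n0 n \<omega> - k0 n \<omega>) / real (n0 n \<omega>))
                + R n \<omega> + (F0 xs - F0 (xhat n \<omega>))" by simp
            finally have eq: "real (n0 n \<omega> - k0 n \<omega>) / real (n0 n \<omega> + 1) - (1 - F0 xs)
              = (real (n0 n \<omega> - k0 n \<omega>) / real (n0 n \<omega> + 1) - real (n0 n \<omega> - k0 n \<omega>) / real (n0 n \<omega>))
                + R n \<omega> + (F0 xs - F0 (xhat n \<omega>))" .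
            have dd: "\<bar>real (n0 n \<omega> - k0 n \<omega>) / real (n0 n \<omega> + 1) - real (n0 n \<omega> - k0 n \<omega>) / real (n0 n \<omega>)\<bar> < e3"
              by (rule order_le_less_trans[OF d1 order_less_trans[OF d2 elim(1)]])
            have n2': "\<bar>F0 xs - F0 (xhat n \<omega>)\<bar> \<le> e3" using n2 by (simp add: abs_minus_commute)
            have "\<bar>real (n0 n \<omega> - k0 n \<omega>) / real (n0 n \<omega> + 1) - (1 - F0 xs)\<bar> < 3 * e3"
              by (rule fin3[OF eq dd n1 n2'])
            then show False using big e3(2) by linarith
          qed
        qed
      qed
    qed
  qed

  have hB: "conv_in_prob M (\<lambda>n \<omega>. real (k1 n \<omega>) / real (n - n0 n \<omega> + 1)) (F1 xs)"
    unfolding conv_in_prob_def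
  proof (intro allI impI)
    fix e :: real assume e: "e > 0"
    define e3 where "e3 = e / 3"
    have e3: "e3 > 0" "e = 3 * e3" using e unfolding e3_def by auto
    define R where "R n \<omega> = (if n - n0 n \<omega> = 0 then c1 n \<omega> else real (k1 n \<omega>) / real (n - n0 n \<omega>)) - F1 (xhat n \<omega>)" for n \<omega>
    have [measurable]: "R n \<in> borel_measurable M" for n unfolding R_def by measurable
    define S1 where "S1 n = {\<omega>\<in>space M. e3 < \<bar>R n \<omega> - 0\<bar>}" for n
    define S2 where "S2 n = {\<omega>\<in>space M. e3 < \<bar>F1 (xhat n \<omega>) - F1 xs\<bar>}" for n
    have S1m: "S1 n \<in> sets M" for n unfolding S1_def by measurable
    have S2m: "S2 n \<in> sets M" for n unfolding S2_def by measurable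
    have S1l: "(\<lambda>n. measure M (S1 n)) \<longlonglongrightarrow> 0"
      using A3b e3(1) unfolding conv_in_prob_def S1_def R_def by blast
    have S2l: "(\<lambda>n. measure M (S2 n)) \<longlonglongrightarrow> 0"
      using Fconv[OF F1c e3(1)] unfolding S2_def .
    have p1: "0 < 1 - \<pi>0" using pi0 by simp
    have evh: "eventually (\<lambda>n. (2/(1-\<pi>0)) / real n < e3) sequentially"
      using order_tendstoD(2)[OF inv_lim[of "2/(1-\<pi>0)"] e3(1)] .
    show "(\<lambda>n. measure M {\<omega> \<in> space M. e < \<bar>real (k1 n \<omega>) / real (n - n0 n \<omega> + 1) - F1 xs\<bar>}) \<longlonglongrightarrow> 0"
    proof (rule small3[OF FM S1m S2m B1m S1l S2l B1l])
      show "eventually (\<lambda>n. {\<omega> \<in> space M. e < \<bar>real (k1 n \<omega>) / real (n - n0 n \<omega> + 1) - F1 xs\<bar>}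
              \<subseteq> S1 n \<union> S2 n \<union> B1 n) sequentially"
        using evh eventually_gt_at_top[of "0::nat"]
      proof eventually_elim
        case (elim n)
        show ?case
        proof (intro subsetI)
          fix \<omega> assume "\<omega> \<in> {\<omega> \<in> space M. e < \<bar>real (k1 n \<omega>) / real (n - n0 n \<omega> + 1) - F1 xs\<bar>}"
          then have \<omega>: "\<omega> \<in> space M" and big: "e < \<bar>real (k1 n \<omega>) / real (n - n0 n \<omega> + 1) - F1 xs\<bar>"
            by auto
          show "\<omega> \<in> S1 n \<union> S2 n \<union> B1 n"
          proof (rule ccontr)
            assume "\<omega> \<notin> S1 n \<union> S2 n \<union> B1 n"
            then have n1: "\<bar>R n \<omega>\<bar> \<le> e3" and n2: "\<bar>F1 (xhat n \<omega>) - F1 xs\<bar> \<le> e3"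
              and n3: "\<not> \<pi>0 + (1-\<pi>0)/2 \<le> real (n0 n \<omega>) / real n"
              using \<omega> unfolding S1_def S2_def B1_def by auto
            have "real (n0 n \<omega>) / real n < \<pi>0 + (1-\<pi>0)/2" using n3 by simp
            then have lt: "real (n0 n \<omega>) < (\<pi>0 + (1-\<pi>0)/2) * real n" using elim(2) by (simp add: field_simps)
            moreover have "(\<pi>0 + (1-\<pi>0)/2) * real n < 1 * real n"
              using pi0 elim(2) by (intro mult_strict_right_mono) (auto simp: field_simps)
            ultimately have "real (n0 n \<omega>) < real n" by simp
            then have lt2: "n0 n \<omega> < n" by simp
            then have req: "real (n - n0 n \<omega>) = real n - real (n0 n \<omega>)" by simp
            have m: "(1 - \<pi>0) * real n / 2 < real (n - n0 n \<omega>)"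
              unfolding req using lt by (simp add: field_simps)
            have mpos: "0 < n - n0 n \<omega>" using lt2 by simp
            have d1: "\<bar>real (k1 n \<omega>) / real (n - n0 n \<omega> + 1) - real (k1 n \<omega>) / real (n - n0 n \<omega>)\<bar>
                \<le> 1 / real (n - n0 n \<omega>)"
              using ratio_diff[OF k1_le[OF \<omega>] mpos] by simp
            have d2: "1 / real (n - n0 n \<omega>) < (2/(1-\<pi>0)) / real n"
              using inv_bound[OF p1 _ m] elim(2) by simp
            have Req: "R n \<omega> = real (k1 n \<omega>) / real (n - n0 n \<omega>) - F1 (xhat n \<omega>)"
              using mpos unfolding R_def by simp
            have "real (k1 n \<omega>) / real (n - n0 n \<omega> + 1) - F1 xs
              = (real (k1 n \<omega>) / real (n - n0 n \<omega> + 1) - real (k1 n \<omega>) / real (n - n0 n \<omega>))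
                + R n \<omega> + (F1 (xhat n \<omega>) - F1 xs)"
              unfolding Req by simp
            note eq = this
            have dd: "\<bar>real (k1 n \<omega>) / real (n - n0 n \<omega> + 1) - real (k1 n \<omega>) / real (n - n0 n \<omega>)\<bar> < e3"
              by (rule order_le_less_trans[OF d1 order_less_trans[OF d2 elim(1)]])
            have "\<bar>real (k1 n \<omega>) / real (n - n0 n \<omega> + 1) - F1 xs\<bar> < 3 * e3"
              by (rule fin3[OF eq dd n1 n2])
            then show False using big e3(2) by linarith
          qed
        qed
      qed
    qed
  qed
  show ?thesis using hA hB by simp
qed

end
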